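(* Let $y,z$ be nonzero complex numbers and let $u_n=u_n(y,z)$, $v_n=v_n(y,z)$ be the Lucas sequences of the first and second kind. Let $x,r\in\mathbb{C}$ and let $c,n$ be integers with $n\ge c$; if $c<0$ assume moreover $x\neq 0$. Then \[ \sum_{k=c}^n r^{n-k}x^k\big(r v_k(y,z)+(xy-2r)u_{k+1}(y,z)\big)=x^{n+1}y\,u_{n+1}(y,z)-r^{n-c+1}x^c y\,u_c(y,z) \] and \[ \sum_{k=c}^n r^{n-k}x^k\big((y^2-4z)r\,u_k(y,z)+(xy-2r)v_{k+1}(y,z)\big)=x^{n+1}y\,v_{n+1}(y,z)-r^{n-c+1}x^c y\,v_c(y,z). \]
   Context: For nonzero complex numbers $y,z$, the Lucas sequences $u_n(y,z)$ and $v_n(y,z)$ are defined by $u_0=0$, $u_1=1$, $v_0=2$, $v_1=y$ and $w_n=y\,w_{n-1}-z\,w_{n-2}$ for $n\ge 2$ (for $w=u$ and $w=v$), and extended to negative indices by $u_{-n}(y,z)=-u_n(y,z)/z^n$ and $v_{-n}(y,z)=v_n(y,z)/z^n$. *)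

theory Defs
  imports Complex_Main
begin

fun lucas_u_nat :: "complex \<Rightarrow> complex \<Rightarrow> nat \<Rightarrow> complex" where
  "lucas_u_nat y z 0 = 0"
| "lucas_u_nat y z (Suc 0) = 1"
| "lucas_u_nat y z (Suc (Suc n)) = y * lucas_u_nat y z (Suc n) - z * lucas_u_nat y z n"

fun lucas_v_nat :: "complex \<Rightarrow> complex \<Rightarrow> nat \<Rightarrow> complex" where
  "lucas_v_nat y z 0 = 2"
| "lucas_v_nat y z (Suc 0) = y"
| "lucas_v_nat y z (Suc (Suc n)) = y * lucas_v_nat y z (Suc n) - z * lucas_v_nat y z n"

definition lucas_u :: "complex \<Rightarrow> complex \<Rightarrow> int \<Rightarrow> complex" where
  "lucas_u y z k = (if k \<ge> 0 then lucas_u_nat y z (nat k)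
                    else - lucas_u_nat y z (nat (-k)) / z ^ nat (-k))"

definition lucas_v :: "complex \<Rightarrow> complex \<Rightarrow> int \<Rightarrow> complex" where
  "lucas_v y z k = (if k \<ge> 0 then lucas_v_nat y z (nat k)
                    else lucas_v_nat y z (nat (-k)) / z ^ nat (-k))"

end

theory Submission
  imports Defs
begin

lemma natA0:
  "lucas_v_nat y z m = 2 * lucas_u_nat y z (Suc m) - y * lucas_u_nat y z m \<and>
   lucas_v_nat y z (Suc m) = 2 * lucas_u_nat y z (Suc (Suc m)) - y * lucas_u_nat y z (Suc m)"
proof (induction m)
  case 0
  then show ?case by (simp add: algebra_simps)
next
  case (Suc m)
  then have p: "lucas_v_nat y z m = 2 * lucas_u_nat y z (Suc m) - y * lucas_u_nat y z m"
    and q: "lucas_v_nat y z (Suc m) = 2 * lucas_u_nat y z (Suc (Suc m)) - y * lucas_u_nat y z (Suc m)"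
    by auto
  show ?case
    by (simp only: lucas_v_nat.simps lucas_u_nat.simps p q) (simp add: algebra_simps)
qed

lemma natA: "lucas_v_nat y z m = 2 * lucas_u_nat y z (Suc m) - y * lucas_u_nat y z m"
  using natA0 by blast

lemma natB: "(y^2 - 4*z) * lucas_u_nat y z m = 2 * lucas_v_nat y z (Suc m) - y * lucas_v_nat y z m"
  by (simp only: natA lucas_u_nat.simps) (simp add: algebra_simps power2_eq_square)

lemma natA': "lucas_v_nat y z (Suc m) = y * lucas_u_nat y z (Suc m) - 2 * z * lucas_u_nat y z m"
  by (simp only: natA lucas_u_nat.simps) (simp add: algebra_simps)

lemma natB': "(y^2 - 4*z) * lucas_u_nat y z (Suc m) = y * lucas_v_nat y z (Suc m) - 2 * z * lucas_v_nat y z m"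
  by (simp only: natA lucas_u_nat.simps) (simp add: algebra_simps power2_eq_square)

lemma u_neg: "lucas_u y z (- int m) = - lucas_u_nat y z m / z ^ m"
  unfolding lucas_u_def by (cases "m = 0") auto

lemma v_neg: "lucas_v y z (- int m) = lucas_v_nat y z m / z ^ m"
  unfolding lucas_v_def by (cases "m = 0") auto

lemma negA: "z \<noteq> 0 \<Longrightarrow> lucas_v y z (- int (Suc m)) = 2 * lucas_u y z (- int (Suc m) + 1) - y * lucas_u y z (- int (Suc m))"
proof -
  assume z: "z \<noteq> 0"
  have k1: "- int (Suc m) + 1 = - int m" by simp
  have e: "lucas_v_nat y z (Suc m) = y * lucas_u_nat y z (Suc m) - 2 * z * lucas_u_nat y z m" by (rule natA')
  show ?thesis unfolding k1 u_neg v_neg using z e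
    by (simp add: field_simps)
qed

lemma negB: "z \<noteq> 0 \<Longrightarrow> (y^2 - 4*z) * lucas_u y z (- int (Suc m)) = 2 * lucas_v y z (- int (Suc m) + 1) - y * lucas_v y z (- int (Suc m))"
proof -
  assume z: "z \<noteq> 0"
  have k1: "- int (Suc m) + 1 = - int m" by simp
  have e: "(y^2 - 4*z) * lucas_u_nat y z (Suc m) = y * lucas_v_nat y z (Suc m) - 2 * z * lucas_v_nat y z m" by (rule natB')
  have "2 * (lucas_v_nat y z m / z^m) - y * (lucas_v_nat y z (Suc m) / z^Suc m)
      = (2*z*lucas_v_nat y z m - y*lucas_v_nat y z (Suc m)) / z^Suc m" using z by (simp add: field_simps)
  also have "\<dots> = - ((y^2 - 4*z) * lucas_u_nat y z (Suc m)) / z^Suc m"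
    by (simp only: e) (simp add: algebra_simps)
  finally show ?thesis unfolding k1 u_neg v_neg by simp
qed

lemma idA: "lucas_v y z k = 2 * lucas_u y z (k+1) - y * lucas_u y z k"
  if "z \<noteq> 0"
proof (cases "k \<ge> 0")
  case True
  then have "nat (k+1) = Suc (nat k)" by simp
  then show ?thesis using True natA[of y z "nat k"] by (simp add: lucas_u_def lucas_v_def)
next
  case False
  define m where "m = nat (-k) - 1"
  have k: "k = - int (Suc m)" using False m_def by simp
  show ?thesis unfolding k by (rule negA[OF that])
qed

lemma idB: "(y^2 - 4*z) * lucas_u y z k = 2 * lucas_v y z (k+1) - y * lucas_v y z k"
  if "z \<noteq> 0"
proof (cases "k \<ge> 0")
  case True
  then have "nat (k+1) = Suc (nat k)" by simp
  then show ?thesis using True natB[of y z "nat k"] by (simp add: lucas_u_def lucas_v_def)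
next
  case False
  define m where "m = nat (-k) - 1"
  have k: "k = - int (Suc m)" using False m_def by simp
  show ?thesis unfolding k by (rule negB[OF that])
qed

lemma tele:
  fixes w :: "int \<Rightarrow> complex" and x r y :: complex
  assumes "c \<le> m" "m \<le> N" "c < 0 \<Longrightarrow> x \<noteq> 0"
  shows "(\<Sum>k=c..m. r powi (N-k) * x powi k * (x*y*w(k+1) - r*y*w k))
       = r powi (N-m) * x powi (m+1) * y * w (m+1) - r powi (N-c+1) * x powi c * y * w c"
  using assms(1,2)
proof (induction m rule: int_ge_induct)
  case base
  have x1: "x powi (c+1) = x powi c * x" using assms(3)
    by (intro power_int_add_1) auto
  have r1: "r powi (N-c+1) = r powi (N-c) * r" using base
    by (intro power_int_add_1) auto
  show ?case using x1 r1 by (simp add: algebra_simps)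
next
  case (step m)
  have x1: "x powi (m+1+1) = x powi (m+1) * x" using assms(3) step
    by (intro power_int_add_1) auto
  have r1: "r powi (N-(m+1)+1) = r powi (N-(m+1)) * r" using step
    by (intro power_int_add_1) auto
  have e: "N - m = N-(m+1)+1" by simp
  have s: "{c..m+1} = insert (m+1) {c..m}" using step by auto
  show ?case using step x1 r1 unfolding s e
    by (simp add: algebra_simps)
qed

theorem theorem1:
  fixes y z x r :: complex and c n :: int
  assumes "y \<noteq> 0" and "z \<noteq> 0" and "c \<le> n" and "c < 0 \<Longrightarrow> x \<noteq> 0"
  shows "((\<Sum>k=c..n. r powi (n - k) * x powi k *
            (r * lucas_v y z k + (x * y - 2 * r) * lucas_u y z (k + 1)))
         = x powi (n + 1) * y * lucas_u y z (n + 1)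
           - r powi (n - c + 1) * x powi c * y * lucas_u y z c) \<and>
         ((\<Sum>k=c..n. r powi (n - k) * x powi k *
            ((y^2 - 4 * z) * r * lucas_u y z k + (x * y - 2 * r) * lucas_v y z (k + 1)))
         = x powi (n + 1) * y * lucas_v y z (n + 1)
           - r powi (n - c + 1) * x powi c * y * lucas_v y z c)"
proof
  have "(\<Sum>k=c..n. r powi (n - k) * x powi k *
            (r * lucas_v y z k + (x * y - 2 * r) * lucas_u y z (k + 1)))
      = (\<Sum>k=c..n. r powi (n-k) * x powi k * (x*y*lucas_u y z (k+1) - r*y*lucas_u y z k))"
    by (rule sum.cong) (auto simp: idA[OF assms(2)] algebra_simps)
  also have "\<dots> = x powi (n + 1) * y * lucas_u y z (n + 1)
           - r powi (n - c + 1) * x powi c * y * lucas_u y z c"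
    using tele[of c n n x] assms by simp
  finally show "(\<Sum>k=c..n. r powi (n - k) * x powi k *
            (r * lucas_v y z k + (x * y - 2 * r) * lucas_u y z (k + 1)))
         = x powi (n + 1) * y * lucas_u y z (n + 1)
           - r powi (n - c + 1) * x powi c * y * lucas_u y z c" .
next
  have "(\<Sum>k=c..n. r powi (n - k) * x powi k *
            ((y^2 - 4 * z) * r * lucas_u y z k + (x * y - 2 * r) * lucas_v y z (k + 1)))
      = (\<Sum>k=c..n. r powi (n-k) * x powi k * (x*y*lucas_v y z (k+1) - r*y*lucas_v y z k))"
  proof (rule sum.cong)
    fix k assume "k \<in> {c..n}"
    have "(y^2 - 4 * z) * r * lucas_u y z k = r * ((y^2 - 4 * z) * lucas_u y z k)" by simp
    then show "r powi (n - k) * x powi k *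
            ((y^2 - 4 * z) * r * lucas_u y z k + (x * y - 2 * r) * lucas_v y z (k + 1))
       = r powi (n-k) * x powi k * (x*y*lucas_v y z (k+1) - r*y*lucas_v y z k)"
      by (simp only: idB[OF assms(2)]) (simp add: algebra_simps)
  qed simp
  also have "\<dots> = x powi (n + 1) * y * lucas_v y z (n + 1)
           - r powi (n - c + 1) * x powi c * y * lucas_v y z c"
    using tele[of c n n x] assms by simp
  finally show "(\<Sum>k=c..n. r powi (n - k) * x powi k *
            ((y^2 - 4 * z) * r * lucas_u y z k + (x * y - 2 * r) * lucas_v y z (k + 1)))
         = x powi (n + 1) * y * lucas_v y z (n + 1)
           - r powi (n - c + 1) * x powi c * y * lucas_v y z c" .
qed

end
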